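(* Let $N\ge 1$ and consider a multi-threshold neuron whose membrane voltage $V$ is a random variable uniformly distributed on $[0,1]$. Let $V_{th,1},\dots,V_{th,N}$ be thresholds with $V_{th,1}>V_{th,2}>\dots>V_{th,N}>0$ and $\sum_{i=1}^N V_{th,i}\le 1$. Suppose the neuron can fire at most one spike for each threshold, so that $V = \alpha_1 V_{th,1}+\alpha_2 V_{th,2}+\dots+\alpha_N V_{th,N}+r(V)$, where $\alpha_i\in\{0,1\}$ indicates whether a spike is fired at the $i$-th threshold and $r(V)\ge 0$ is the error between $V$ and the output weighted sum of spikes. Then the series of thresholds minimizing the expected error $\mathbb{E}[r(V)]=\int_0^1 r(V)\,dV$ satisfies $V_{th,i+1}=V_{th,i}/2$ for $i=1,\dots,N-1$ and $V_{th,N}=1/2^N$, and the minimal expected error equals $1/2^{N+1}$.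
   Context: Firing rule of the multi-threshold neuron: the thresholds are processed from highest to lowest. Set $R_0=V$; for $i=1,\dots,N$, the neuron fires a spike at threshold $i$ (i.e. $\alpha_i=1$) if $R_{i-1}\ge V_{th,i}$, and otherwise $\alpha_i=0$; then $R_i=R_{i-1}-\alpha_i V_{th,i}$. The error is $r(V)=R_N = V-\sum_{i=1}^N \alpha_i V_{th,i}$. *)

theory Defs
  imports "HOL-Analysis.Analysis"
begin

text \<open>Thresholds are given as a function th :: nat => real, where th i is the
i-th threshold (i = 1..N).  The remainder after processing thresholds 1..i
(from highest to lowest) follows the firing rule: R_0 = V, and a spike is
fired at threshold i iff R_(i-1) >= th i, in which case R_i = R_(i-1) - th i.\<close>

fun remainder :: "(nat \<Rightarrow> real) \<Rightarrow> real \<Rightarrow> nat \<Rightarrow> real" where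
  "remainder th V 0 = V"
| "remainder th V (Suc i) =
     (if remainder th V i \<ge> th (Suc i) then remainder th V i - th (Suc i)
      else remainder th V i)"

definition err :: "(nat \<Rightarrow> real) \<Rightarrow> nat \<Rightarrow> real \<Rightarrow> real" where
  "err th N V = remainder th V N"

definition expected_err :: "(nat \<Rightarrow> real) \<Rightarrow> nat \<Rightarrow> real" where
  "expected_err th N = integral {0..1} (err th N)"

definition admissible :: "nat \<Rightarrow> (nat \<Rightarrow> real) \<Rightarrow> bool" where
  "admissible N th \<longleftrightarrow>
     (\<forall>i\<in>{1..<N}. th i > th (Suc i)) \<and> th N > 0 \<and> (\<Sum>i=1..N. th i) \<le> 1"

end

theory Submission
  imports Defs
begin

lemma remainder_shift:
  "remainder th V (Suc n) =
   remainder (\<lambda>k. th (Suc k)) (if V \<ge> th 1 then V - th 1 else V) n"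
  by (induction n) auto

lemma aux: "(X::real) > 0 \<Longrightarrow> 2*(a+b) = c+d \<Longrightarrow> a/X + b/X = c/(2*X) + d/(2*X)"
  by (simp add: field_simps)

lemma main_ind:
  "\<And>th L. L \<ge> 0 \<Longrightarrow> (\<forall>i\<in>{1..M}. th i > 0) \<Longrightarrow>
   \<exists>I. ((\<lambda>V. remainder th V M) has_integral I) {0..L} \<and> I \<ge> L^2 / 2^(M+1)
     \<and> ((I = L^2 / 2^(M+1) \<and> L > 0) \<longrightarrow> (\<forall>i\<in>{1..M}. th i = L / 2^i))
     \<and> ((\<forall>i\<in>{1..M}. th i = L / 2^i) \<longrightarrow> I = L^2 / 2^(M+1))"
proof (induction M)
  case 0
  show ?case
    using ident_has_integral[of 0 L] 0 by auto
next
  case (Suc M th L)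
  define t where "t = th 1"
  define th' where "th' = (\<lambda>k. th (Suc k))"
  have tpos: "t > 0" using Suc.prems t_def by auto
  have pos': "\<forall>i\<in>{1..M}. th' i > 0" using Suc.prems th'_def by auto
  have feq: "\<And>V. remainder th V (Suc M) = remainder th' (if V \<ge> t then V - t else V) M"
    using remainder_shift t_def th'_def by metis
  let ?g = "\<lambda>V. remainder th' V M"
  let ?f = "\<lambda>V. remainder th V (Suc M)"
  have bin1: "(\<forall>i\<in>{1..Suc M}. th i = L / 2^i) \<longleftrightarrow>
      t = L/2 \<and> (\<forall>i\<in>{1..M}. th' i = (L/2) / 2^i)"
  proof
    assume H: "\<forall>i\<in>{1..Suc M}. th i = L / 2^i"
    show "t = L/2 \<and> (\<forall>i\<in>{1..M}. th' i = (L/2) / 2^i)"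
      using H unfolding t_def th'_def by auto
  next
    assume H: "t = L/2 \<and> (\<forall>i\<in>{1..M}. th' i = (L/2) / 2^i)"
    show "\<forall>i\<in>{1..Suc M}. th i = L / 2^i"
    proof
      fix i assume i: "i \<in> {1..Suc M}"
      show "th i = L / 2^i"
      proof (cases "i = 1")
        case True then show ?thesis using H t_def by auto
      next
        case False
        then obtain j where j: "i = Suc j" "j \<in> {1..M}" using i
          by (cases i) auto
        then show ?thesis using H th'_def by auto
      qed
    qed
  qed
  show ?case
  proof (cases "L \<le> t")
    case True
    obtain I where I: "(?g has_integral I) {0..L}" "I \<ge> L^2/2^(M+1)"
      using Suc.IH[OF Suc.prems(1) pos'] by blast
    have fi: "(?f has_integral I) {0..L}"
    proof (rule has_integral_spike_finite[OF _ _ I(1), of "{t}"])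
      fix x assume "x \<in> {0..L} - {t}"
      then have "\<not> x \<ge> t" using True by auto
      then show "?f x = ?g x" using feq by simp
    qed simp
    have le: "L^2/2^(Suc M+1) \<le> L^2/2^(M+1)"
      by (simp add: divide_left_mono)
    show ?thesis
    proof (intro exI conjI impI)
      show "(?f has_integral I) {0..L}" by (rule fi)
      show "I \<ge> L^2/2^(Suc M+1)" using le I(2) by linarith
    next
      assume H: "I = L^2/2^(Suc M+1) \<and> L > 0"
      have "L^2/2^(Suc M+1) < L^2/2^(M+1)" using H
        by (intro divide_strict_left_mono) auto
      then show "\<forall>i\<in>{1..Suc M}. th i = L / 2^i" using H I(2) by linarith
    next
      assume "\<forall>i\<in>{1..Suc M}. th i = L / 2^i"
      then have "t = L/2" using bin1 by blast
      then show "I = L^2/2^(Suc M+1)" using True tpos by linarith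
    qed
  next
    case False
    obtain I1 where I1: "(?g has_integral I1) {0..t}" "I1 \<ge> t^2/2^(M+1)"
      "(I1 = t^2/2^(M+1) \<and> t > 0) \<longrightarrow> (\<forall>i\<in>{1..M}. th' i = t/2^i)"
      "(\<forall>i\<in>{1..M}. th' i = t/2^i) \<longrightarrow> I1 = t^2/2^(M+1)"
      using Suc.IH[of t th'] tpos pos' by auto
    obtain I2 where I2: "(?g has_integral I2) {0..L-t}" "I2 \<ge> (L-t)^2/2^(M+1)"
      "(I2 = (L-t)^2/2^(M+1) \<and> L-t > 0) \<longrightarrow> (\<forall>i\<in>{1..M}. th' i = (L-t)/2^i)"
      "(\<forall>i\<in>{1..M}. th' i = (L-t)/2^i) \<longrightarrow> I2 = (L-t)^2/2^(M+1)"
      using Suc.IH[of "L-t" th'] False pos' by auto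
    have f1: "(?f has_integral I1) {0..t}"
    proof (rule has_integral_spike_finite[OF _ _ I1(1), of "{t}"])
      fix x assume "x \<in> {0..t} - {t}"
      then have "\<not> x \<ge> t" by auto
      then show "?f x = ?g x" using feq by simp
    qed simp
    have "((\<lambda>x. ?g (x + - t)) has_integral I2) {0 - - t..(L-t) - - t}"
      by (rule has_integral_shift_real_ivl[OF I2(1)])
    then have g2: "((\<lambda>x. ?g (x - t)) has_integral I2) {t..L}" by simp
    have f2: "(?f has_integral I2) {t..L}"
      using g2 by (rule has_integral_eq[rotated]) (auto simp del: remainder.simps simp add: feq)
    have fi: "(?f has_integral (I1 + I2)) {0..L}"
      by (rule has_integral_combine[OF _ _ f1 f2]) (use tpos False in auto)
    have sq: "2 * (t^2 + (L-t)^2) - L^2 = (2*t - L)^2" by (simp add: power2_eq_square algebra_simps)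
    have p: "(2::real)^(Suc M+1) = 2 * 2^(M+1)" by simp
    have key: "t^2/2^(M+1) + (L-t)^2/2^(M+1) = L^2/2^(Suc M+1) + (2*t-L)^2/2^(Suc M + 1)"
      unfolding p using aux[of "2^(M+1)" "t^2" "(L-t)^2" "L^2" "(2*t-L)^2"] sq by simp
    have nn: "(2*t-L)^2/2^(Suc M + 1) \<ge> 0" by simp
    show ?thesis
    proof (intro exI conjI impI)
      show "(?f has_integral (I1+I2)) {0..L}" by (rule fi)
      show "I1 + I2 \<ge> L^2/2^(Suc M+1)" using key nn I1(2) I2(2) by linarith
    next
      assume H: "I1 + I2 = L^2/2^(Suc M+1) \<and> L > 0"
      have z: "(2*t-L)^2/2^(Suc M + 1) = 0" and e1: "I1 = t^2/2^(M+1)" and e2: "I2 = (L-t)^2/2^(M+1)"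
        using key nn I1(2) I2(2) H by linarith+
      have tL: "t = L/2" using z by simp
      have "\<forall>i\<in>{1..M}. th' i = t/2^i" using I1(3) e1 tpos by blast
      then have "\<forall>i\<in>{1..M}. th' i = (L/2)/2^i" using tL by simp
      then show "\<forall>i\<in>{1..Suc M}. th i = L / 2^i" using bin1 tL by blast
    next
      assume "\<forall>i\<in>{1..Suc M}. th i = L / 2^i"
      then have ht: "t = L/2" and h': "\<forall>i\<in>{1..M}. th' i = (L/2) / 2^i" using bin1 by auto
      have "L - t = t" using ht by simp
      then have "I1 = t^2/2^(M+1)" "I2 = t^2/2^(M+1)" using I1(4) I2(4) h' ht by auto
      then show "I1 + I2 = L^2/2^(Suc M+1)" using ht by (simp add: field_simps power2_eq_square)
    qed
  qed
qed

lemma adm_pos: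
  assumes "admissible N th" "i \<in> {1..N}"
  shows "th i > 0"
proof -
  have "th N \<le> th i"
    using assms(2)
  proof -
    have "i \<le> N" "1 \<le> i" using assms(2) by auto
    then show ?thesis
    proof (induction i rule: inc_induct)
      case base then show ?case by simp
    next
      case (step n)
      then have "th n > th (Suc n)" using assms(1) unfolding admissible_def by auto
      then show ?case using step by fastforce
    qed
  qed
  then show ?thesis using assms(1) unfolding admissible_def by auto
qed

lemma geo_sum: "(\<Sum>i=1..N. (1::real) / 2^i) = 1 - 1/2^N"
  by (induction N) (auto simp: field_simps)

lemma err_has:
  assumes "admissible N th"
  shows "\<exists>I. expected_err th N = I \<and> I \<ge> 1/2^(N+1)
     \<and> (I = 1/2^(N+1) \<longrightarrow> (\<forall>i\<in>{1..N}. th i = 1 / 2^i))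
     \<and> ((\<forall>i\<in>{1..N}. th i = 1 / 2^i) \<longrightarrow> I = 1/2^(N+1))"
proof -
  have pos: "\<forall>i\<in>{1..N}. th i > 0" using adm_pos[OF assms] by blast
  obtain I where I: "((\<lambda>V. remainder th V N) has_integral I) {0..1}" "I \<ge> 1^2 / 2^(N+1)"
     "((I = 1^2 / 2^(N+1) \<and> (1::real) > 0) \<longrightarrow> (\<forall>i\<in>{1..N}. th i = 1 / 2^i))"
     "((\<forall>i\<in>{1..N}. th i = 1 / 2^i) \<longrightarrow> I = 1^2 / 2^(N+1))"
    using main_ind[of 1 N th] pos by auto
  have "expected_err th N = I"
    unfolding expected_err_def err_def using I(1) by (simp add: integral_unique)
  then show ?thesis using I by auto
qed

theorem theorem1:
  fixes N :: nat
  assumes "N \<ge> 1"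
  shows "(\<exists>th. admissible N th \<and> expected_err th N = 1 / 2 ^ (N + 1))
       \<and> (\<forall>th. admissible N th \<longrightarrow> expected_err th N \<ge> 1 / 2 ^ (N + 1))
       \<and> (\<forall>th. admissible N th \<longrightarrow>
              (\<forall>th'. admissible N th' \<longrightarrow> expected_err th N \<le> expected_err th' N) \<longrightarrow>
              (\<forall>i\<in>{1..<N}. th (Suc i) = th i / 2) \<and> th N = 1 / 2 ^ N)"
proof -
  define b where "b = (\<lambda>i::nat. (1::real) / 2^i)"
  have s1: "(\<Sum>i=1..N. b i) \<le> 1" unfolding b_def geo_sum by simp
  have adm: "admissible N b"
    unfolding admissible_def using s1 by (auto simp: b_def field_simps)
  have bval: "expected_err b N = 1 / 2^(N+1)"
    using err_has[OF adm] unfolding b_def by auto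
  have A: "\<exists>th. admissible N th \<and> expected_err th N = 1 / 2 ^ (N + 1)"
    using adm bval by blast
  have B: "\<forall>th. admissible N th \<longrightarrow> expected_err th N \<ge> 1 / 2 ^ (N + 1)"
    using err_has by blast
  have C: "(\<forall>i\<in>{1..<N}. th (Suc i) = th i / 2) \<and> th N = 1 / 2 ^ N"
    if a: "admissible N th" and opt: "\<forall>th'. admissible N th' \<longrightarrow> expected_err th N \<le> expected_err th' N"
    for th
  proof -
    have "expected_err th N \<le> 1/2^(N+1)" using opt adm bval by metis
    then have "expected_err th N = 1/2^(N+1)" using B a by force
    then have H: "\<forall>i\<in>{1..N}. th i = 1 / 2^i" using err_has[OF a] by auto
    show ?thesis
    proof
      show "\<forall>i\<in>{1..<N}. th (Suc i) = th i / 2"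
        using H by auto
      show "th N = 1 / 2^N" using H assms by auto
    qed
  qed
  show ?thesis using A B C by blast
qed

end
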